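(* Let $\varepsilon>0$, $\kappa\ge\frac14$, $\Delta t>0$, and set $\kappa^*=\kappa-\frac18$, $C_4=\frac{1}{1-e^{-2}}$, $\gamma^{(0)}=3C_4(1+\kappa)$, and $\alpha_0=\ln\Big(\frac{\gamma^{(0)}+\frac12\kappa}{\gamma^{(0)}-\frac12\kappa}\Big)$ (the unique positive solution of $\frac{e^{-\alpha_0}}{1-e^{-\alpha_0}}+\frac12=\frac{\gamma^{(0)}}{\kappa}$). Suppose $$A\ge \Big(\gamma^{(0)}-\frac{\kappa}{4}\Big)^4\alpha_0^{-2}\varepsilon^{-2}.$$ Then for every real periodic grid function $f$ with zero mean, $$\Big(\frac{\varepsilon^2}{2}+A\Delta t^2\Big)\|\Delta_N f\|_2^2+\kappa^*\|\nabla_N f\|_2^2+\Big\langle\Big(\frac{1}{\Delta t}\mathcal G_N-L_N\Big)f,f\Big\rangle\ge \gamma^{(0)}\|\nabla_N f\|_2^2.$$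
   Context: Setting: $\Omega=(0,1)^2$, $N=2K+1$, $h=1/N$, grid $x_i=ih$, $y_j=jh$; periodic grid functions have discrete Fourier expansions $f_{i,j}=\sum_{k,\ell=-K}^{K}\hat f_{k,\ell}\exp(2\pi\mathrm{i}(kx_i+\ell y_j))$. Spectral operators act as Fourier multipliers: $\mathcal D_{Nx}$, $\mathcal D_{Ny}$ by $2\pi\mathrm{i}k$, $2\pi\mathrm{i}\ell$; $\nabla_N f=(\mathcal D_{Nx}f,\mathcal D_{Ny}f)$; $\Delta_N$ by $-\lambda_{k,\ell}$, $\lambda_{k,\ell}=(2k\pi)^2+(2\ell\pi)^2$. Inner product $\langle f,g\rangle=h^2\sum_{i,j}f_{i,j}g_{i,j}$, $\|f\|_2=\langle f,f\rangle^{1/2}$. $L_N=\varepsilon^2\Delta_N^2-\kappa\Delta_N$ has multiplier $\Lambda_{k,\ell}=\varepsilon^2\lambda_{k,\ell}^2+\kappa\lambda_{k,\ell}$. On zero-mean grid functions, $\mathcal G_N=\Delta tL_N(I-e^{-\Delta tL_N})^{-1}$ is the multiplier $\frac{\Delta t\Lambda_{k,\ell}}{1-e^{-\Delta t\Lambda_{k,\ell}}}$ on modes $(k,\ell)\ne(0,0)$. *)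

theory Defs
  imports Complex_Main
begin

(* Grid: N = 2K+1 points per direction, h = 1/N, x_i = i h, indices i,j in {0..<N}.
   Periodic grid functions are functions nat => nat => real read on {0..<N}^2. *)

definition gridN :: "nat \<Rightarrow> nat" where
  "gridN K = 2 * K + 1"

definition lam :: "int \<Rightarrow> int \<Rightarrow> real" where
  "lam k l = (2 * of_int k * pi)^2 + (2 * of_int l * pi)^2"

(* discrete Fourier coefficient: f_{i,j} = sum_{k,l=-K..K} fhat_{k,l} exp(2 pi i (k x_i + l y_j)) *)
definition dft :: "nat \<Rightarrow> (nat \<Rightarrow> nat \<Rightarrow> real) \<Rightarrow> int \<Rightarrow> int \<Rightarrow> complex" where
  "dft K f k l = (1 / (of_nat (gridN K))^2) *
     (\<Sum>i<gridN K. \<Sum>j<gridN K. complex_of_real (f i j) *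
        cis (- 2 * pi * (of_int k * of_nat i + of_int l * of_nat j) / of_nat (gridN K)))"

(* spectral operator with Fourier multiplier m; applied to real grid functions
   (real part taken: for the multipliers used here the result is real) *)
definition fmult :: "nat \<Rightarrow> (int \<Rightarrow> int \<Rightarrow> complex) \<Rightarrow> (nat \<Rightarrow> nat \<Rightarrow> real) \<Rightarrow> nat \<Rightarrow> nat \<Rightarrow> real" where
  "fmult K m f i j = Re (\<Sum>k\<in>{- int K..int K}. \<Sum>l\<in>{- int K..int K}.
      m k l * dft K f k l *
      cis (2 * pi * (of_int k * of_nat i + of_int l * of_nat j) / of_nat (gridN K)))"

definition DNx :: "nat \<Rightarrow> (nat \<Rightarrow> nat \<Rightarrow> real) \<Rightarrow> nat \<Rightarrow> nat \<Rightarrow> real" where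
  "DNx K = fmult K (\<lambda>k l. \<i> * complex_of_real (2 * pi * of_int k))"

definition DNy :: "nat \<Rightarrow> (nat \<Rightarrow> nat \<Rightarrow> real) \<Rightarrow> nat \<Rightarrow> nat \<Rightarrow> real" where
  "DNy K = fmult K (\<lambda>k l. \<i> * complex_of_real (2 * pi * of_int l))"

definition LapN :: "nat \<Rightarrow> (nat \<Rightarrow> nat \<Rightarrow> real) \<Rightarrow> nat \<Rightarrow> nat \<Rightarrow> real" where
  "LapN K = fmult K (\<lambda>k l. complex_of_real (- lam k l))"

definition LamL :: "real \<Rightarrow> real \<Rightarrow> int \<Rightarrow> int \<Rightarrow> real" where
  "LamL eps kappa k l = eps^2 * (lam k l)^2 + kappa * lam k l"

(* L_N = eps^2 Delta_N^2 - kappa Delta_N *)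
definition LN :: "nat \<Rightarrow> real \<Rightarrow> real \<Rightarrow> (nat \<Rightarrow> nat \<Rightarrow> real) \<Rightarrow> nat \<Rightarrow> nat \<Rightarrow> real" where
  "LN K eps kappa = fmult K (\<lambda>k l. complex_of_real (LamL eps kappa k l))"

(* G_N on zero-mean functions; the (0,0) mode multiplier is irrelevant there and set to 0 *)
definition GN :: "nat \<Rightarrow> real \<Rightarrow> real \<Rightarrow> real \<Rightarrow> (nat \<Rightarrow> nat \<Rightarrow> real) \<Rightarrow> nat \<Rightarrow> nat \<Rightarrow> real" where
  "GN K eps kappa dt = fmult K (\<lambda>k l. if k = 0 \<and> l = 0 then 0 else
      complex_of_real (dt * LamL eps kappa k l / (1 - exp (- dt * LamL eps kappa k l))))"

definition ginner :: "nat \<Rightarrow> (nat \<Rightarrow> nat \<Rightarrow> real) \<Rightarrow> (nat \<Rightarrow> nat \<Rightarrow> real) \<Rightarrow> real" where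
  "ginner K f g = (1 / of_nat (gridN K))^2 * (\<Sum>i<gridN K. \<Sum>j<gridN K. f i j * g i j)"

definition gnorm :: "nat \<Rightarrow> (nat \<Rightarrow> nat \<Rightarrow> real) \<Rightarrow> real" where
  "gnorm K f = sqrt (ginner K f f)"

definition gradnorm2 :: "nat \<Rightarrow> (nat \<Rightarrow> nat \<Rightarrow> real) \<Rightarrow> real" where
  "gradnorm2 K f = (gnorm K (DNx K f))^2 + (gnorm K (DNy K f))^2"

end

theory Submission
  imports Defs
begin


lemma poly_ineq:
  fixes u T B kappa :: real
  assumes u: "u > 0" and uT: "u < 2*T" and kap: "kappa > 0" and T2: "T \<ge> 2*kappa"
    and BT: "B \<ge> T + kappa/4"
  shows "u*(u+kappa)^2*(T - u/2) \<le> B^4"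
proof -
  define v where "v = u/2"
  have v: "v > 0" "v < T" using u uT by (auto simp: v_def)
  define X where "X = (3*T - 2*v)/2"
  define Y where "Y = v + kappa/2"
  have X: "X > 0" using v by (simp add: X_def)
  have Y: "Y > 0" using v kap by (simp add: Y_def)
  have e1: "u*(u+kappa)^2*(T - u/2) = (8/3) * (3*v*(T-v)) * Y^2"
  proof -
    have "u = 2*v" by (simp add: v_def)
    thus ?thesis by (simp add: Y_def power2_eq_square algebra_simps)
  qed
  have a1: "3*v*(T-v) \<le> X^2"
  proof -
    have "X^2 - 3*v*(T-v) = ((3*T - 4*v)/2)^2 / 1 - 0 + 0" 
      by (simp add: X_def power2_eq_square field_simps)
    moreover have "((3*T - 4*v)/2)^2 \<ge> 0" by simp
    ultimately show ?thesis by linarith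
  qed
  have a2: "X*Y \<le> ((3*T+kappa)/4)^2"
  proof -
    have "((3*T+kappa)/4)^2 - X*Y = ((X - Y)/2)^2"
      by (simp add: X_def Y_def power2_eq_square field_simps)
    moreover have "((X - Y)/2)^2 \<ge> 0" by simp
    ultimately show ?thesis by linarith
  qed
  have a3: "(X*Y)^2 \<le> ((3*T+kappa)/4)^4"
  proof -
    have "(X*Y)^2 \<le> (((3*T+kappa)/4)^2)^2"
      using a2 X Y by (intro power_mono) auto
    thus ?thesis by simp
  qed
  have "u*(u+kappa)^2*(T - u/2) \<le> (8/3) * X^2 * Y^2"
    unfolding e1 using a1 Y by (intro mult_right_mono mult_left_mono) auto
  also have "\<dots> = (8/3) * (X*Y)^2" by (simp add: power_mult_distrib)
  also have "\<dots> \<le> (8/3) * ((3*T+kappa)/4)^4" using a3 by simp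
  also have "\<dots> \<le> (T + kappa/4)^4"
  proof -
    have c: "(4*T+kappa) \<ge> (32/25)*(3*T+kappa)" using T2 kap by simp
    have "((32/25)*(3*T+kappa))^4 \<le> (4*T+kappa)^4"
      using c T2 kap by (intro power_mono) auto
    hence "(32/25)^4*(3*T+kappa)^4 \<le> (4*T+kappa)^4" by (simp only: power_mult_distrib)
    moreover have "(3*T+kappa)^4 \<ge> 0" by simp
    ultimately have "(8/3)*(3*T+kappa)^4 \<le> (4*T+kappa)^4"
    proof -
      have "(8/3::real) \<le> (32/25)^4" by (simp add: power_def)
      hence "(8/3)*(3*T+kappa)^4 \<le> (32/25)^4*(3*T+kappa)^4"
        by (intro mult_right_mono) auto
      with \<open>(32/25)^4*(3*T+kappa)^4 \<le> (4*T+kappa)^4\<close> show ?thesis by linarith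
    qed
    moreover have "(T + kappa/4)^4 = (4*T+kappa)^4/256" by (simp add: field_simps)
    moreover have "((3*T+kappa)/4)^4 = (3*T+kappa)^4/256" by (simp add: field_simps)
    ultimately show ?thesis by simp
  qed
  also have "\<dots> \<le> B^4" using BT T2 kap by (intro power_mono) auto
  finally show ?thesis .
qed

lemma mode_ineq:
  fixes eps kappa dt A lam g :: real
  assumes eps: "eps > 0" and kap: "kappa \<ge> 1/4" and dt: "dt > 0" and lam: "lam > 0"
    and g: "g \<ge> 3*(1+kappa)"
    and A: "A \<ge> (g - kappa/4)^4 * (ln ((g + kappa/2)/(g - kappa/2))) powi (-2) * eps powi (-2)"
  shows "(eps^2/2 + A*dt^2)*lam^2 + (kappa-1/8)*lam
     + ((1/dt)*(dt*(eps^2*lam^2+kappa*lam)/(1 - exp (- dt*(eps^2*lam^2+kappa*lam))))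
        - (eps^2*lam^2+kappa*lam)) \<ge> g*lam"
proof -
  define Lm where "Lm = eps^2*lam^2+kappa*lam"
  define u where "u = eps^2*lam"
  define x where "x = dt*Lm"
  define B where "B = g - kappa/4"
  define T where "T = g - kappa + 1/8"
  define r where "r = (g + kappa/2)/(g - kappa/2)"
  define a where "a = ln r"
  have kp: "kappa > 0" using kap by simp
  have gk: "g - kappa/2 > 0" using g kap by simp
  have u: "u > 0" using eps lam by (simp add: u_def)
  have Lmu: "Lm = lam*(u+kappa)" by (simp add: Lm_def u_def power2_eq_square algebra_simps)
  have Lm: "Lm > 0" using Lmu lam u kp by simp
  have Lmk: "Lm \<ge> kappa*lam" using Lmu lam u by (simp add: algebra_simps)
  have x: "x > 0" using dt Lm by (simp add: x_def)
  have r1: "r > 1" using gk kp by (simp add: r_def field_simps)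
  have a: "a > 0" using r1 by (simp add: a_def)
  have expa: "exp a = r" using r1 by (simp add: a_def)
  define Q where "Q = (1/dt)*(dt*Lm/(1 - exp (- dt*Lm))) - Lm"
  have ex1: "exp x > 1" using x by simp
  have Q: "Q = Lm/(exp x - 1)"
  proof -
    have "exp (-x) = 1/exp x" by (simp add: exp_minus field_simps)
    hence d: "1 - exp (-dt*Lm) = (exp x - 1)/exp x" using x_def by (simp add: field_simps)
    have "Q = Lm * exp x / (exp x - 1) - Lm" unfolding Q_def d using dt ex1 by simp
    also have "\<dots> = Lm/(exp x - 1)" using ex1 by (simp add: field_simps)
    finally show ?thesis .
  qed
  have Qn: "Q \<ge> 0" using Q Lm ex1 by simp
  have Apos: "A * eps^2 * a^2 \<ge> B^4"
  proof -
    have "A \<ge> B^4 / (a^2 * eps^2)" using A unfolding B_def a_def r_def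
      by (simp add: power_int_minus field_simps)
    thus ?thesis using a eps by (simp add: field_simps)
  qed
  have A0: "A \<ge> 0"
  proof (rule ccontr)
    assume "\<not> A \<ge> 0"
    hence "A * (eps^2 * a^2) < 0" using a eps by (intro mult_neg_pos) auto
    moreover have "B^4 \<ge> 0" by simp
    ultimately show False using Apos by (simp add: mult.assoc)
  qed
  have goal: "(eps^2/2 + A*dt^2)*lam^2 + (kappa-1/8)*lam + Q \<ge> g*lam"
  proof (cases "x \<le> a")
    case True
    have "exp x \<le> r" using True expa by (metis exp_le_cancel_iff)
    hence e: "exp x - 1 \<le> kappa/(g-kappa/2)" using gk by (simp add: r_def field_simps)
    have q1: "Q \<ge> Lm/(kappa/(g-kappa/2))"
      unfolding Q using e ex1 Lm kp gk by (intro divide_left_mono) auto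
    have q2: "Lm/(kappa/(g-kappa/2)) = Lm*(g-kappa/2)/kappa" using kp gk by simp
    have q3: "Lm*(g-kappa/2)/kappa \<ge> kappa*lam*(g-kappa/2)/kappa"
      using Lmk gk kp by (intro divide_right_mono mult_right_mono) auto
    have "Q \<ge> lam*(g-kappa/2)" using q1 q2 q3 kp by simp
    moreover have "(eps^2/2 + A*dt^2)*lam^2 \<ge> 0"
    proof -
      show ?thesis using A0 by simp
    qed
    moreover have "kappa*lam \<ge> (1/4)*lam" using kap lam by (intro mult_right_mono) auto
    moreover have "(eps^2/2 + A*dt^2)*lam^2 + (kappa-1/8)*lam + Q
       = ((eps^2/2 + A*dt^2)*lam^2) + kappa*lam - lam/8 + Q" by (simp add: algebra_simps)
    moreover have "lam*(g-kappa/2) = g*lam - kappa*lam/2" by (simp add: algebra_simps)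
    ultimately show ?thesis by linarith
  next
    case False
    hence xa: "x > a" by simp
    have xa2: "x^2 \<ge> a^2" using xa a by (intro power_mono) auto
    have key: "A*dt^2*lam^2 * (u*(u+kappa)^2) \<ge> lam*B^4"
    proof -
      have "A*dt^2*lam^2 * (u*(u+kappa)^2) = A*eps^2*lam*x^2"
        by (simp add: x_def Lmu u_def power2_eq_square algebra_simps)
      also have "\<dots> \<ge> A*eps^2*lam*a^2"
        using xa2 A0 lam by (intro mult_left_mono) auto
      finally show ?thesis using Apos lam
        by (smt (verit, ccfv_SIG) mult.commute mult.left_commute mult_left_mono)
    qed
    have main: "u/2*lam + A*dt^2*lam^2 \<ge> T*lam"
    proof (cases "u \<ge> 2*T")
      case True
      have "A*dt^2*lam^2 \<ge> 0" using A0 by simp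
      moreover have "u/2*lam \<ge> T*lam" using True lam by (intro mult_right_mono) auto
      ultimately show ?thesis by linarith
    next
      case False
      have pi: "u*(u+kappa)^2*(T - u/2) \<le> B^4"
        using False u kp g kap by (intro poly_ineq) (auto simp: T_def B_def)
      have pp: "u*(u+kappa)^2 > 0" using u kp by simp
      have "lam*(u*(u+kappa)^2*(T - u/2)) \<le> lam*B^4" using pi lam by simp
      also have "\<dots> \<le> A*dt^2*lam^2 * (u*(u+kappa)^2)" using key .
      finally have "lam*(T-u/2) * (u*(u+kappa)^2) \<le> A*dt^2*lam^2 * (u*(u+kappa)^2)"
        by (simp add: algebra_simps)
      hence "lam*(T-u/2) \<le> A*dt^2*lam^2" using pp by (metis mult_le_cancel_right_pos)
      thus ?thesis by (simp add: algebra_simps)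
    qed
    have "(eps^2/2 + A*dt^2)*lam^2 = u/2*lam + A*dt^2*lam^2"
      by (simp add: u_def power2_eq_square algebra_simps)
    thus ?thesis using main Qn kap lam by (simp add: T_def algebra_simps)
  qed
  thus ?thesis by (simp add: Q_def Lm_def)
qed



lemma orth1:
  fixes d :: int and N :: nat
  assumes N: "N > 0" and d: "\<bar>d\<bar> < int N"
  shows "(\<Sum>i<N. cis (2*pi*(of_int d * of_nat i)/of_nat N)) = (if d = 0 then of_nat N else 0)"
proof (cases "d = 0")
  case True thus ?thesis by simp
next
  case False
  define z where "z = cis (2*pi*of_int d/of_nat N)"
  have zi: "cis (2*pi*(of_int d * of_nat i)/of_nat N) = z^i" for i
    unfolding z_def DeMoivre by (simp add: mult_ac)
  have zN: "z^N = 1"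
  proof -
    have "real N * (2*pi*of_int d/of_nat N) = 2*pi*of_int d" using N by simp
    thus ?thesis unfolding z_def DeMoivre by simp
  qed
  have z1: "z \<noteq> 1"
  proof
    assume "z = 1"
    hence "cos (2*pi*of_int d/of_nat N) = 1" unfolding z_def by (metis cis.sel(1) one_complex.sel(1))
    then obtain n :: int where n: "2*pi*of_int d/of_nat N = of_int n * 2 * pi"
      using cos_one_2pi_int by blast
    hence "of_int d = of_int n * (of_nat N::real)" using N by (simp add: field_simps)
    hence dn: "d = n * int N" by (metis of_int_eq_iff of_int_mult of_int_of_nat_eq)
    show False
    proof (cases "n = 0")
      case True thus False using dn False by simp
    next
      case nz: False
      have "\<bar>d\<bar> = \<bar>n\<bar> * int N" using dn by (simp add: abs_mult)
      also have "\<dots> \<ge> 1 * int N" using nz by (intro mult_right_mono) auto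
      finally show False using d by simp
    qed
  qed
  have "(\<Sum>i<N. cis (2*pi*(of_int d * of_nat i)/of_nat N)) = (\<Sum>i<N. z^i)" using zi by simp
  also have "\<dots> = 0" using geometric_sum[OF z1] zN by simp
  finally show ?thesis using False by simp
qed

definition EE :: "nat \<Rightarrow> int \<Rightarrow> int \<Rightarrow> nat \<Rightarrow> nat \<Rightarrow> complex" where
  "EE K k l i j = cis (2*pi*(of_int k * of_nat i + of_int l * of_nat j)/of_nat (gridN K))"

abbreviation RR :: "nat \<Rightarrow> int set" where "RR K \<equiv> {- int K..int K}"

lemma gridN_pos: "gridN K > 0" by (simp add: gridN_def)

lemma fmult_EE: "fmult K m f i j = Re (\<Sum>k\<in>RR K. \<Sum>l\<in>RR K. m k l * dft K f k l * EE K k l i j)"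
  by (simp add: fmult_def EE_def)

lemma cis_neg_aux: "cis (- 2 * pi * x / n) = cnj (cis (2*pi*x/n))"
  unfolding cis_cnj by (rule arg_cong[where f=cis]) simp

lemma dft_EE: "dft K f k l = (1 / (of_nat (gridN K))^2) *
     (\<Sum>i<gridN K. \<Sum>j<gridN K. complex_of_real (f i j) * cnj (EE K k l i j))"
  unfolding dft_def EE_def cis_neg_aux ..

lemma cnj_dft: "cnj (dft K f k l) = (1 / (of_nat (gridN K))^2) *
     (\<Sum>i<gridN K. \<Sum>j<gridN K. complex_of_real (f i j) * EE K k l i j)"
  unfolding dft_EE by (simp only: complex_cnj_mult cnj_sum complex_cnj_complex_of_real complex_cnj_cnj
    complex_cnj_divide complex_cnj_one complex_cnj_power complex_cnj_of_nat)

lemma EE_mult_cnj: "EE K k' l' i j * cnj (EE K k l i j) =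
   cis (2*pi*(of_int (k'-k) * of_nat i)/of_nat (gridN K)) * cis (2*pi*(of_int (l'-l) * of_nat j)/of_nat (gridN K))"
  unfolding EE_def cis_cnj cis_mult
proof (rule arg_cong[where f=cis])
  let ?N = "real (gridN K)"
  have "2 * pi * (of_int k' * of_nat i + of_int l' * of_nat j) / ?N +
      - (2 * pi * (of_int k * of_nat i + of_int l * of_nat j) / ?N)
     = (2 * pi * (of_int k' * of_nat i + of_int l' * of_nat j) - 2 * pi * (of_int k * of_nat i + of_int l * of_nat j)) / ?N"
    by (simp add: diff_divide_distrib)
  also have "\<dots> = (2*pi*(of_int (k'-k) * of_nat i) + 2*pi*(of_int (l'-l) * of_nat j)) / ?N"
    by (rule arg_cong[where f="\<lambda>x. x / ?N"]) (simp add: algebra_simps)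
  also have "\<dots> = 2*pi*(of_int (k'-k) * of_nat i)/?N + 2*pi*(of_int (l'-l) * of_nat j)/?N"
    by (simp add: add_divide_distrib)
  finally show "2 * pi * (of_int k' * of_nat i + of_int l' * of_nat j) / ?N +
      - (2 * pi * (of_int k * of_nat i + of_int l * of_nat j) / ?N) =
      2*pi*(of_int (k'-k) * of_nat i)/?N + 2*pi*(of_int (l'-l) * of_nat j)/?N" .
qed

lemma orth2:
  assumes "k \<in> RR K" "k' \<in> RR K" "l \<in> RR K" "l' \<in> RR K"
  shows "(\<Sum>i<gridN K. \<Sum>j<gridN K. EE K k' l' i j * cnj (EE K k l i j)) =
     (if k' = k \<and> l' = l then (of_nat (gridN K))^2 else 0)"
proof -
  have d1: "\<bar>k'-k\<bar> < int (gridN K)" "\<bar>l'-l\<bar> < int (gridN K)" using assms by (auto simp: gridN_def)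
  have "(\<Sum>i<gridN K. \<Sum>j<gridN K. EE K k' l' i j * cnj (EE K k l i j)) =
     (\<Sum>i<gridN K. cis (2*pi*(of_int (k'-k) * of_nat i)/of_nat (gridN K))) *
     (\<Sum>j<gridN K. cis (2*pi*(of_int (l'-l) * of_nat j)/of_nat (gridN K)))"
    unfolding EE_mult_cnj by (simp add: sum_product)
  also have "\<dots> = (if k' = k \<and> l' = l then (of_nat (gridN K))^2 else 0)"
    unfolding orth1[OF gridN_pos d1(1)] orth1[OF gridN_pos d1(2)] by (simp add: power2_eq_square)
  finally show ?thesis .
qed

lemma swap4:
  "(\<Sum>i\<in>A. \<Sum>j\<in>B. \<Sum>k\<in>C. \<Sum>l\<in>D. F i j k l) = (\<Sum>k\<in>C. \<Sum>l\<in>D. \<Sum>i\<in>A. \<Sum>j\<in>B. F i j k l)"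
proof -
  have "(\<Sum>i\<in>A. \<Sum>j\<in>B. \<Sum>k\<in>C. \<Sum>l\<in>D. F i j k l) = (\<Sum>i\<in>A. \<Sum>k\<in>C. \<Sum>j\<in>B. \<Sum>l\<in>D. F i j k l)"
    by (rule sum.cong[OF refl], rule sum.swap)
  also have "\<dots> = (\<Sum>k\<in>C. \<Sum>i\<in>A. \<Sum>j\<in>B. \<Sum>l\<in>D. F i j k l)" by (rule sum.swap)
  also have "\<dots> = (\<Sum>k\<in>C. \<Sum>i\<in>A. \<Sum>l\<in>D. \<Sum>j\<in>B. F i j k l)"
    by (rule sum.cong[OF refl], rule sum.cong[OF refl], rule sum.swap)
  also have "\<dots> = (\<Sum>k\<in>C. \<Sum>l\<in>D. \<Sum>i\<in>A. \<Sum>j\<in>B. F i j k l)"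
    by (rule sum.cong[OF refl], rule sum.swap)
  finally show ?thesis .
qed

definition SS :: "nat \<Rightarrow> (int \<Rightarrow> int \<Rightarrow> complex) \<Rightarrow> (nat \<Rightarrow> nat \<Rightarrow> real) \<Rightarrow> nat \<Rightarrow> nat \<Rightarrow> complex" where
  "SS K m f i j = (\<Sum>k\<in>RR K. \<Sum>l\<in>RR K. m k l * dft K f k l * EE K k l i j)"

lemma inner_fmult:
  "ginner K (fmult K m f) g = Re (\<Sum>k\<in>RR K. \<Sum>l\<in>RR K. m k l * dft K f k l * cnj (dft K g k l))"
proof -
  let ?N = "gridN K"
  let ?c = "complex_of_real ((1 / of_nat ?N)^2)"
  have "ginner K (fmult K m f) g = (1 / of_nat ?N)^2 * (\<Sum>i<?N. \<Sum>j<?N. Re (SS K m f i j) * g i j)"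
    unfolding ginner_def fmult_EE SS_def ..
  also have "\<dots> = Re (?c * (\<Sum>i<?N. \<Sum>j<?N. SS K m f i j * complex_of_real (g i j)))"
    by simp
  also have "(\<Sum>i<?N. \<Sum>j<?N. SS K m f i j * complex_of_real (g i j)) =
     (\<Sum>i<?N. \<Sum>j<?N. \<Sum>k\<in>RR K. \<Sum>l\<in>RR K. m k l * dft K f k l * EE K k l i j * complex_of_real (g i j))"
    unfolding SS_def by (simp add: sum_distrib_right)
  also have "\<dots> = (\<Sum>k\<in>RR K. \<Sum>l\<in>RR K. \<Sum>i<?N. \<Sum>j<?N. m k l * dft K f k l * EE K k l i j * complex_of_real (g i j))"
    by (rule swap4)
  also have "?c * \<dots> = (\<Sum>k\<in>RR K. \<Sum>l\<in>RR K. m k l * dft K f k l *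
      (?c * (\<Sum>i<?N. \<Sum>j<?N. complex_of_real (g i j) * EE K k l i j)))"
    by (simp add: sum_distrib_left mult_ac)
  also have "\<dots> = (\<Sum>k\<in>RR K. \<Sum>l\<in>RR K. m k l * dft K f k l * cnj (dft K g k l))"
  proof -
    have cc: "?c = 1 / (of_nat ?N)^2" by (simp add: power_one_over)
    show ?thesis unfolding cnj_dft cc ..
  qed
  finally show ?thesis .
qed

lemma sum_neg_RR: "(\<Sum>k\<in>RR K. h (- k)) = (\<Sum>k\<in>RR K. h k)"
  by (rule sum.reindex_bij_witness[of _ uminus uminus]) auto

lemma cnj_EE: "cnj (EE K k l i j) = EE K (-k) (-l) i j"
  unfolding EE_def cis_cnj by (rule arg_cong[where f=cis]) (simp add: minus_divide_left algebra_simps)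

lemma cnj_dft_neg: "cnj (dft K f k l) = dft K f (-k) (-l)"
  unfolding cnj_dft dft_EE by (simp add: cnj_EE)

definition herm :: "(int \<Rightarrow> int \<Rightarrow> complex) \<Rightarrow> bool" where
  "herm m \<longleftrightarrow> (\<forall>k l. m (-k) (-l) = cnj (m k l))"

lemma SS_real:
  assumes "herm m"
  shows "complex_of_real (fmult K m f i j) = SS K m f i j"
proof -
  have "cnj (SS K m f i j) = (\<Sum>k\<in>RR K. \<Sum>l\<in>RR K. m (-k) (-l) * dft K f (-k) (-l) * EE K (-k) (-l) i j)"
    unfolding SS_def using assms by (simp add: herm_def cnj_dft_neg cnj_EE)
  also have "\<dots> = (\<Sum>k\<in>RR K. \<Sum>l\<in>RR K. m k (-l) * dft K f k (-l) * EE K k (-l) i j)"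
    by (rule sum_neg_RR[where h="\<lambda>k. \<Sum>l\<in>RR K. m k (-l) * dft K f k (-l) * EE K k (-l) i j"])
  also have "\<dots> = SS K m f i j"
    unfolding SS_def by (rule sum.cong[OF refl], rule sum_neg_RR[where h="\<lambda>l. m _ l * dft K f _ l * EE K _ l i j"])
  finally have c: "cnj (SS K m f i j) = SS K m f i j" .
  hence "Im (SS K m f i j) = 0" by (metis complex_cnj_cancel_iff complex_eq_iff complex_cnj_zero_iff
        cnj.sel(2) neg_equal_zero)
  thus ?thesis unfolding fmult_EE SS_def[symmetric] by (simp add: complex_eq_iff)
qed

lemma dft_fmult:
  assumes h: "herm m" and k: "k \<in> RR K" and l: "l \<in> RR K"
  shows "dft K (fmult K m f) k l = m k l * dft K f k l"
proof -
  let ?N = "gridN K"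
  have "dft K (fmult K m f) k l = (1 / (of_nat ?N)^2) *
     (\<Sum>i<?N. \<Sum>j<?N. SS K m f i j * cnj (EE K k l i j))"
    unfolding dft_EE SS_real[OF h] ..
  also have "(\<Sum>i<?N. \<Sum>j<?N. SS K m f i j * cnj (EE K k l i j)) =
      (\<Sum>i<?N. \<Sum>j<?N. \<Sum>k'\<in>RR K. \<Sum>l'\<in>RR K. m k' l' * dft K f k' l' * (EE K k' l' i j * cnj (EE K k l i j)))"
    unfolding SS_def sum_distrib_right by (simp add: mult_ac)
  also have "\<dots> = (\<Sum>k'\<in>RR K. \<Sum>l'\<in>RR K. \<Sum>i<?N. \<Sum>j<?N. m k' l' * dft K f k' l' * (EE K k' l' i j * cnj (EE K k l i j)))"
    by (rule swap4)
  also have "\<dots> = (\<Sum>k'\<in>RR K. \<Sum>l'\<in>RR K. m k' l' * dft K f k' l' * (\<Sum>i<?N. \<Sum>j<?N. EE K k' l' i j * cnj (EE K k l i j)))"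
    by (simp add: sum_distrib_left)
  also have "\<dots> = (\<Sum>k'\<in>RR K. \<Sum>l'\<in>RR K. m k' l' * dft K f k' l' * (if k' = k \<and> l' = l then (of_nat ?N)^2 else 0))"
    by (intro sum.cong refl, subst orth2) (use k l in auto)
  also have "\<dots> = m k l * dft K f k l * (of_nat ?N)^2"
  proof -
    let ?C = "m k l * dft K f k l * (of_nat ?N)^2"
    have "(\<Sum>k'\<in>RR K. \<Sum>l'\<in>RR K. m k' l' * dft K f k' l' * (if k' = k \<and> l' = l then (of_nat ?N)^2 else 0))
        = (\<Sum>k'\<in>RR K. if k' = k then (\<Sum>l'\<in>RR K. if l' = l then ?C else 0) else 0)"
    proof (intro sum.cong refl)
      fix k' assume "k' \<in> RR K"
      show "(\<Sum>l'\<in>RR K. m k' l' * dft K f k' l' * (if k' = k \<and> l' = l then (of_nat ?N)^2 else 0))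
         = (if k' = k then (\<Sum>l'\<in>RR K. if l' = l then ?C else 0) else 0)"
      proof (cases "k' = k")
        case True
        have "(\<Sum>l'\<in>RR K. m k l' * dft K f k l' * (if l' = l then (of_nat ?N)^2 else 0))
           = (\<Sum>l'\<in>RR K. if l' = l then ?C else 0)"
          by (rule sum.cong) auto
        thus ?thesis unfolding True by simp
      qed simp
    qed
    also have "\<dots> = ?C" using k l by (simp only: sum.delta[OF finite_atLeastAtMost_int] if_True)
    finally show ?thesis .
  qed
  finally show ?thesis using gridN_pos[of K] by simp
qed

lemma gnorm_sq: "(gnorm K g)^2 = ginner K g g"
  unfolding gnorm_def ginner_def by (simp add: sum_nonneg)

lemma norm_fmult:
  assumes h: "herm m"
  shows "(gnorm K (fmult K m f))^2 = (\<Sum>k\<in>RR K. \<Sum>l\<in>RR K. (cmod (m k l))^2 * (cmod (dft K f k l))^2)"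
proof -
  have "(gnorm K (fmult K m f))^2 = Re (\<Sum>k\<in>RR K. \<Sum>l\<in>RR K. m k l * dft K f k l * cnj (m k l * dft K f k l))"
    unfolding gnorm_sq inner_fmult
    by (intro arg_cong[where f=Re] sum.cong refl) (simp add: dft_fmult[OF h])
  also have "\<dots> = (\<Sum>k\<in>RR K. \<Sum>l\<in>RR K. (cmod (m k l))^2 * (cmod (dft K f k l))^2)"
    by (simp add: complex_norm_square[symmetric] norm_mult power_mult_distrib del: complex_cnj_mult)
  finally show ?thesis .
qed

lemma inner_fmult_self:
  "ginner K (fmult K m f) f = (\<Sum>k\<in>RR K. \<Sum>l\<in>RR K. Re (m k l) * (cmod (dft K f k l))^2)"
proof -
  have "ginner K (fmult K m f) f = Re (\<Sum>k\<in>RR K. \<Sum>l\<in>RR K. m k l * complex_of_real ((cmod (dft K f k l))^2))"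
    unfolding inner_fmult complex_norm_square by (simp add: mult_ac)
  thus ?thesis by simp
qed

lemma lam_neg: "lam (-k) (-l) = lam k l" by (simp add: lam_def)

lemma lam_pos: "\<not> (k = 0 \<and> l = 0) \<Longrightarrow> lam k l > 0"
proof -
  assume a: "\<not> (k = 0 \<and> l = 0)"
  have "(2 * of_int k * pi)^2 > 0 \<or> (2 * of_int l * pi)^2 > (0::real)"
    using a pi_gt_zero by auto
  moreover have "(2 * of_int k * pi)^2 \<ge> (0::real)" "(2 * of_int l * pi)^2 \<ge> (0::real)" by auto
  ultimately show ?thesis unfolding lam_def by linarith
qed

theorem proposition2p2:
  fixes K :: nat and eps kappa dt A :: real and f :: "nat \<Rightarrow> nat \<Rightarrow> real"
  assumes eps: "eps > 0" and kap: "kappa \<ge> 1/4" and dt: "dt > 0"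
    and A: "A \<ge> (3 * (1 / (1 - exp (-2))) * (1 + kappa) - kappa / 4) ^ 4
               * (ln ((3 * (1 / (1 - exp (-2))) * (1 + kappa) + kappa / 2)
                     / (3 * (1 / (1 - exp (-2))) * (1 + kappa) - kappa / 2))) powi (-2)
               * eps powi (-2)"
    and mean0: "(\<Sum>i<gridN K. \<Sum>j<gridN K. f i j) = 0"
  shows "(eps^2 / 2 + A * dt^2) * (gnorm K (LapN K f))^2
         + (kappa - 1/8) * gradnorm2 K f
         + ginner K (\<lambda>i j. (1 / dt) * GN K eps kappa dt f i j - LN K eps kappa f i j) f
         \<ge> 3 * (1 / (1 - exp (-2))) * (1 + kappa) * gradnorm2 K f"
proof -
  define g where "g = 3 * (1 / (1 - exp (-2::real))) * (1 + kappa)"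
  define p where "p k l = (cmod (dft K f k l))^2" for k l
  define mG where "mG k l = (if k = 0 \<and> l = 0 then 0 else
      complex_of_real (dt * LamL eps kappa k l / (1 - exp (- dt * LamL eps kappa k l))))" for k l
  define c1 where "c1 = eps^2 / 2 + A * dt^2"
  define c2 where "c2 = kappa - 1/8"
  have g3: "g \<ge> 3 * (1 + kappa)"
  proof -
    have "exp (-2::real) > 0" by simp
    moreover have "exp (-2::real) < 1" by simp
    ultimately have "1 / (1 - exp (-2::real)) \<ge> 1" by simp
    hence "3 * 1 * (1 + kappa) \<le> 3 * (1 / (1 - exp (-2::real))) * (1 + kappa)"
      using kap by (intro mult_right_mono mult_left_mono) auto
    thus ?thesis unfolding g_def by simp
  qed
  have hL: "herm (\<lambda>k l. complex_of_real (- lam k l))" by (simp add: herm_def lam_neg)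
  have hX: "herm (\<lambda>k l. \<i> * complex_of_real (2 * pi * of_int k))" by (simp add: herm_def)
  have hY: "herm (\<lambda>k l. \<i> * complex_of_real (2 * pi * of_int l))" by (simp add: herm_def)
  have Lp: "(gnorm K (LapN K f))^2 = (\<Sum>k\<in>RR K. \<Sum>l\<in>RR K. (lam k l)^2 * p k l)"
    unfolding LapN_def norm_fmult[OF hL] p_def by simp
  have Gr: "gradnorm2 K f = (\<Sum>k\<in>RR K. \<Sum>l\<in>RR K. lam k l * p k l)"
    unfolding gradnorm2_def DNx_def DNy_def norm_fmult[OF hX] norm_fmult[OF hY] p_def
    by (simp add: norm_mult lam_def sum.distrib[symmetric] algebra_simps power_mult_distrib)
  have In: "ginner K (\<lambda>i j. (1 / dt) * GN K eps kappa dt f i j - LN K eps kappa f i j) f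
      = (1/dt) * ginner K (GN K eps kappa dt f) f - ginner K (LN K eps kappa f) f"
    unfolding ginner_def by (simp add: sum_subtractf sum_distrib_left algebra_simps)
  have IG: "ginner K (GN K eps kappa dt f) f = (\<Sum>k\<in>RR K. \<Sum>l\<in>RR K. Re (mG k l) * p k l)"
    unfolding GN_def inner_fmult_self p_def mG_def ..
  have IL: "ginner K (LN K eps kappa f) f = (\<Sum>k\<in>RR K. \<Sum>l\<in>RR K. LamL eps kappa k l * p k l)"
    unfolding LN_def inner_fmult_self p_def by simp
  have eq: "c1 * (\<Sum>k\<in>RR K. \<Sum>l\<in>RR K. (lam k l)^2 * p k l)
     + c2 * (\<Sum>k\<in>RR K. \<Sum>l\<in>RR K. lam k l * p k l)
     + ((1/dt) * (\<Sum>k\<in>RR K. \<Sum>l\<in>RR K. Re (mG k l) * p k l) - (\<Sum>k\<in>RR K. \<Sum>l\<in>RR K. LamL eps kappa k l * p k l))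
     - g * (\<Sum>k\<in>RR K. \<Sum>l\<in>RR K. lam k l * p k l)
     = (\<Sum>k\<in>RR K. \<Sum>l\<in>RR K. (c1 * (lam k l)^2 + c2 * lam k l + ((1/dt) * Re (mG k l) - LamL eps kappa k l) - g * lam k l) * p k l)"
    by (simp add: sum_distrib_left sum.distrib sum_subtractf algebra_simps)
  have nn: "(\<Sum>k\<in>RR K. \<Sum>l\<in>RR K. (c1 * (lam k l)^2 + c2 * lam k l + ((1/dt) * Re (mG k l) - LamL eps kappa k l) - g * lam k l) * p k l) \<ge> 0"
  proof (intro sum_nonneg mult_nonneg_nonneg)
    fix k l
    show "0 \<le> p k l" by (simp add: p_def)
    show "0 \<le> c1 * (lam k l)^2 + c2 * lam k l + ((1/dt) * Re (mG k l) - LamL eps kappa k l) - g * lam k l"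
    proof (cases "k = 0 \<and> l = 0")
      case True thus ?thesis by (simp add: mG_def LamL_def lam_def)
    next
      case False
      have lp: "lam k l > 0" using lam_pos[OF False] .
      have "(eps^2/2 + A*dt^2)*(lam k l)^2 + (kappa-1/8)*(lam k l)
         + ((1/dt)*(dt*(eps^2*(lam k l)^2+kappa*(lam k l))/(1 - exp (- dt*(eps^2*(lam k l)^2+kappa*(lam k l)))))
        - (eps^2*(lam k l)^2+kappa*(lam k l))) \<ge> g*(lam k l)"
        by (rule mode_ineq[OF eps kap dt lp g3]) (use A in \<open>simp add: g_def\<close>)
      moreover have R: "Re (mG k l) = dt*(eps^2*(lam k l)^2+kappa*(lam k l))/(1 - exp (- dt*(eps^2*(lam k l)^2+kappa*(lam k l))))"
        unfolding mG_def if_not_P[OF False] by (simp add: LamL_def)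
      ultimately show ?thesis unfolding R c1_def c2_def LamL_def by linarith
    qed
  qed
  show ?thesis
    using eq nn unfolding Lp Gr In IG IL g_def[symmetric] c1_def[symmetric] c2_def[symmetric]
    by linarith
qed


end
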